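(* For every vertex $v$ of $K$ and every $n\in\mathbb N$, $$B(\omega(v),2n-2,\omega(K))\subset \omega(B(v,n,K))\subset B(\omega(v),2n+2,\omega(K)).$$
   Context: $K$ is the pentagonal combinatorial tiling: a 2-dimensional CW-complex homeomorphic to the open disk, obtained as follows. The subdivision rule $\omega$ acts on a pentagon with boundary vertices $v_1,\dots,v_5$ in cyclic order (indices mod 5): add a vertex $m_i$ inside each edge $v_iv_{i+1}$, interior vertices $c_1,\dots,c_5$, edges $c_ic_{i+1}$ and $c_im_i$, and replace the face by the central pentagon $c_1\cdots c_5$ and petals $v_i\,m_i\,c_i\,c_{i-1}\,m_{i-1}$. $K_0$ is one pentagon, $K_n=\omega^n(K_0)$, $K_n$ embeds onto the central superpentagon $\omega^n(\text{central face of }\omega(K_0))$ of $K_{n+1}$, and $K$ is the direct limit. $\omega(K)$ is the complex on the same space obtained by applying $\omega$ to every face of $K$; for a subcomplex $P$, $\omega(P)$ is the union of the subdivisions of its faces, a subcomplex of $\omega(K)$; a vertex $v$ of $K$ is also a vertex $\omega(v)$ of $\omega(K)$. For a complex $L$, $B(v,n,L)$ is the subcomplex consisting of the faces all of whose vertices are at edge-path distance at most $n$ from $v$, with their edges and vertices. *)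

theory Defs
  imports "HOL-Library.FSet"
begin

(* Base j i : i-th corner of the level-j superpentagon F_j.
   Mid e, Cen F e : vertices created while building K (midpoint of edge e,
   interior vertex of face F adjacent to the midpoint of edge e).
   OMid e, OCen F e : the new vertices created by omega(K). *)
datatype vname = Base nat nat
  | Mid "vname fset" | Cen "vname fset" "vname fset"
  | OMid "vname fset" | OCen "vname fset" "vname fset"

(* a face is the cyclic list [v1,...,v5] of its boundary vertices *)
type_synonym face = "vname list"

definition subdiv ::
  "(vname fset \<Rightarrow> vname) \<Rightarrow> (vname fset \<Rightarrow> vname fset \<Rightarrow> vname) \<Rightarrow> face \<Rightarrow> face set" where
  "subdiv mid cen f =
    (let v = (\<lambda>i. f ! (i mod 5));
         e = (\<lambda>i. {|v i, v (i + 1)|});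
         F = fset_of_list f;
         m = (\<lambda>i. mid (e i));
         c = (\<lambda>i. cen F (e i))
     in insert [c 0, c 1, c 2, c 3, c 4]
          ((\<lambda>i. [v i, m i, c i, c (i + 4), m (i + 4)]) ` {0..<5}))"

definition top :: "nat \<Rightarrow> face" where
  "top j = [Base j 0, Base j 1, Base j 2, Base j 3, Base j 4]"

(* naming of interior vertices while building K: the central face of
   omega(F_j) (j >= 1) is named F_(j-1), so that K_(j-1) literally sits inside K_j *)
definition kcen :: "vname fset \<Rightarrow> vname fset \<Rightarrow> vname" where
  "kcen F e =
    (if \<exists>j i. 1 \<le> j \<and> i < 5 \<and> F = fset_of_list (top j) \<and> e = {|Base j i, Base j (Suc i mod 5)|}
     then (THE x. \<exists>j i. 1 \<le> j \<and> i < 5 \<and> F = fset_of_list (top j)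
                    \<and> e = {|Base j i, Base j (Suc i mod 5)|} \<and> x = Base (j - 1) i)
     else Cen F e)"

definition omegaK :: "face set \<Rightarrow> face set" where
  "omegaK S = (\<Union>f\<in>S. subdiv Mid kcen f)"

(* K_k = omega^k (F_k);  K_(k-1) is the central superpentagon omega^(k-1)(F_(k-1)) of K_k *)
definition Kn :: "nat \<Rightarrow> face set" where
  "Kn k = (omegaK ^^ k) {top k}"

(* the pentagonal tiling K: direct limit (here: union) of the K_k *)
definition K :: "face set" where
  "K = (\<Union>k. Kn k)"

(* omega(P) for a subcomplex P of K (a set of faces of K): faces of omega(K);
   a vertex v of K is the vertex v of omega(K) *)
definition omega :: "face set \<Rightarrow> face set" where
  "omega P = (\<Union>f\<in>P. subdiv OMid OCen f)"

definition verts :: "face set \<Rightarrow> vname set" where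
  "verts S = (\<Union>f\<in>S. set f)"

definition edges :: "face set \<Rightarrow> (vname \<times> vname) set" where
  "edges S = {(x, y). \<exists>f\<in>S. \<exists>i<length f.
      {x, y} = {f ! i, f ! (Suc i mod length f)}}"

definition within :: "face set \<Rightarrow> nat \<Rightarrow> vname \<Rightarrow> vname \<Rightarrow> bool" where
  "within S r x y = (\<exists>k\<le>r. (x, y) \<in> edges S ^^ k)"

definition ball :: "vname \<Rightarrow> nat \<Rightarrow> face set \<Rightarrow> face set" where
  "ball v r S = {f \<in> S. \<forall>x\<in>set f. within S r v x}"

end

theory Submission
  imports Defs
begin
lemma five: "{0..<5::nat} = {0,1,2,3,4}" by auto

fun isO :: "vname \<Rightarrow> bool" where
  "isO (OMid e) = True" | "isO (OCen F e) = True" | "isO _ = False"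

lemma top_inj: "fset_of_list (top j) = fset_of_list (top j') \<Longrightarrow> j = j'"
proof -
  assume h: "fset_of_list (top j) = fset_of_list (top j')"
  have "Base j 0 |\<in>| fset_of_list (top j)" by (simp add: top_def)
  then have "Base j 0 |\<in>| fset_of_list (top j')" using h by simp
  then show ?thesis by (auto simp: top_def)
qed

lemma edge_inj:
  assumes "i < 5" "i' < 5" "{|Base j i, Base j (Suc i mod 5)|} = {|Base j i', Base j (Suc i' mod 5)|}"
  shows "i = i'"
proof -
  have a: "Base j i |\<in>| {|Base j i', Base j (Suc i' mod 5)|}" using assms(3) by (metis finsertI1)
  have b: "Base j i' |\<in>| {|Base j i, Base j (Suc i mod 5)|}" using assms(3) by (metis finsertI1)
  from a b assms(1,2) show ?thesis by auto presburger?
qed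

lemma kcen_notO: "\<not> isO (kcen F e)"
proof (cases "\<exists>j i. 1 \<le> j \<and> i < 5 \<and> F = fset_of_list (top j) \<and> e = {|Base j i, Base j (Suc i mod 5)|}")
  case True
  define P where "P = (\<lambda>x. \<exists>j i. 1 \<le> j \<and> i < 5 \<and> F = fset_of_list (top j)
                    \<and> e = {|Base j i, Base j (Suc i mod 5)|} \<and> x = Base (j - 1) i)"
  have ex: "\<exists>!x. P x"
  proof -
    from True obtain j i where ji: "1 \<le> j" "i < 5" "F = fset_of_list (top j)" "e = {|Base j i, Base j (Suc i mod 5)|}" by blast
    have "P (Base (j-1) i)" using ji unfolding P_def by blast
    moreover have "y = Base (j-1) i" if "P y" for y
    proof -
      from that obtain j' i' where ji': "1 \<le> j'" "i' < 5" "F = fset_of_list (top j')" "e = {|Base j' i', Base j' (Suc i' mod 5)|}" "y = Base (j' - 1) i'"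
        unfolding P_def by blast
      have "j = j'" using ji ji' top_inj by metis
      then have "i = i'" using ji ji' edge_inj by metis
      then show ?thesis using ji' \<open>j = j'\<close> by simp
    qed
    ultimately show ?thesis by blast
  qed
  have "P (THE x. P x)" using theI'[OF ex] .
  then have "\<exists>j i. (THE x. P x) = Base j i" unfolding P_def by blast
  then have "\<not> isO (THE x. P x)" by auto
  then show ?thesis using True unfolding kcen_def P_def by simp
next
  case False
  then have "kcen F e = Cen F e" unfolding kcen_def by (simp only: if_False)
  then show ?thesis by simp
qed
lemma sd: "subdiv mid cen [a0,a1,a2,a3,a4] =
  (let F = fset_of_list [a0,a1,a2,a3,a4];
       m0 = mid {|a0,a1|}; m1 = mid {|a1,a2|}; m2 = mid {|a2,a3|}; m3 = mid {|a3,a4|}; m4 = mid {|a4,a0|};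
       c0 = cen F {|a0,a1|}; c1 = cen F {|a1,a2|}; c2 = cen F {|a2,a3|}; c3 = cen F {|a3,a4|}; c4 = cen F {|a4,a0|}
   in {[c0,c1,c2,c3,c4], [a0,m0,c0,c4,m4], [a1,m1,c1,c0,m0], [a2,m2,c2,c1,m1], [a3,m3,c3,c2,m2], [a4,m4,c4,c3,m3]})"
  by (simp add: subdiv_def Let_def five)

lemma len5: "length f = 5 \<Longrightarrow> f = [f!0,f!1,f!2,f!3,f!4]"
  by (auto intro!: nth_equalityI simp: less_Suc_eq numeral_eq_Suc)

definition okf :: "face \<Rightarrow> bool" where
  "okf f = (length f = 5 \<and> (\<forall>x\<in>set f. \<not> isO x))"

lemma okf_omegaK: "\<forall>f\<in>S. okf f \<Longrightarrow> \<forall>f\<in>omegaK S. okf f"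
proof
  fix g assume h: "\<forall>f\<in>S. okf f" and g: "g \<in> omegaK S"
  then obtain f where f: "f \<in> S" "g \<in> subdiv Mid kcen f" unfolding omegaK_def by blast
  then have "okf f" using h by blast
  then have l: "f = [f!0,f!1,f!2,f!3,f!4]" and n: "\<forall>x\<in>set f. \<not> isO x" using len5 unfolding okf_def by auto
  then have n': "\<not> isO (f!0)" "\<not> isO (f!1)" "\<not> isO (f!2)" "\<not> isO (f!3)" "\<not> isO (f!4)"
    by (metis list.set_intros nth_Cons_0 nth_Cons_Suc numeral_eq_Suc pred_numeral_simps)+
  have "g \<in> subdiv Mid kcen [f!0,f!1,f!2,f!3,f!4]" using f l by simp
  then have "g \<in> {[kcen (fset_of_list [f!0,f!1,f!2,f!3,f!4]) {|f!0,f!1|}, kcen (fset_of_list [f!0,f!1,f!2,f!3,f!4]) {|f!1,f!2|}, kcen (fset_of_list [f!0,f!1,f!2,f!3,f!4]) {|f!2,f!3|}, kcen (fset_of_list [f!0,f!1,f!2,f!3,f!4]) {|f!3,f!4|}, kcen (fset_of_list [f!0,f!1,f!2,f!3,f!4]) {|f!4,f!0|}],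
     [f!0, Mid {|f!0,f!1|}, kcen (fset_of_list [f!0,f!1,f!2,f!3,f!4]) {|f!0,f!1|}, kcen (fset_of_list [f!0,f!1,f!2,f!3,f!4]) {|f!4,f!0|}, Mid {|f!4,f!0|}],
     [f!1, Mid {|f!1,f!2|}, kcen (fset_of_list [f!0,f!1,f!2,f!3,f!4]) {|f!1,f!2|}, kcen (fset_of_list [f!0,f!1,f!2,f!3,f!4]) {|f!0,f!1|}, Mid {|f!0,f!1|}],
     [f!2, Mid {|f!2,f!3|}, kcen (fset_of_list [f!0,f!1,f!2,f!3,f!4]) {|f!2,f!3|}, kcen (fset_of_list [f!0,f!1,f!2,f!3,f!4]) {|f!1,f!2|}, Mid {|f!1,f!2|}],
     [f!3, Mid {|f!3,f!4|}, kcen (fset_of_list [f!0,f!1,f!2,f!3,f!4]) {|f!3,f!4|}, kcen (fset_of_list [f!0,f!1,f!2,f!3,f!4]) {|f!2,f!3|}, Mid {|f!2,f!3|}],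
     [f!4, Mid {|f!4,f!0|}, kcen (fset_of_list [f!0,f!1,f!2,f!3,f!4]) {|f!4,f!0|}, kcen (fset_of_list [f!0,f!1,f!2,f!3,f!4]) {|f!3,f!4|}, Mid {|f!3,f!4|}]}"
    by (simp only: sd Let_def)
  then show "okf g" unfolding okf_def
    apply (simp only: insert_iff empty_iff)
    apply (elim disjE; simp only: list.size set_simps ball_simps n' kcen_notO isO.simps simp_thms)
    using n' by (simp_all add: kcen_notO)
qed

lemma okf_pow: "\<forall>f\<in>S. okf f \<Longrightarrow> \<forall>f\<in>(omegaK ^^ k) S. okf f"
  by (induction k) (auto dest: okf_omegaK)

lemma Kface: "f \<in> K \<Longrightarrow> okf f"
proof -
  assume "f \<in> K"
  then obtain k where "f \<in> Kn k" unfolding K_def by blast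
  moreover have "\<forall>f\<in>{top k}. okf f" by (simp add: okf_def top_def)
  ultimately show ?thesis unfolding Kn_def using okf_pow by blast
qed

lemma edgesI: "f \<in> S \<Longrightarrow> i < length f \<Longrightarrow> (f!i, f!(Suc i mod length f)) \<in> edges S"
  unfolding edges_def by blast

lemma edges_sym: "(x,y) \<in> edges S \<Longrightarrow> (y,x) \<in> edges S"
  unfolding edges_def by (auto simp: insert_commute)

lemma within_mono: "within S r x y \<Longrightarrow> r \<le> s \<Longrightarrow> within S s x y"
  unfolding within_def using le_trans by blast

lemma within_edge: "within S r x y \<Longrightarrow> (y,z) \<in> edges S \<Longrightarrow> within S (Suc r) x z"
  unfolding within_def by (auto intro: relpow_Suc_I)

lemma within_trans: "within S r x y \<Longrightarrow> within S s y z \<Longrightarrow> within S (r+s) x z"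
proof -
  assume a: "within S r x y" "within S s y z"
  then obtain k1 k2 where "k1 \<le> r" "k2 \<le> s" "(x,y) \<in> edges S ^^ k1" "(y,z) \<in> edges S ^^ k2"
    unfolding within_def by blast
  then have "(x,z) \<in> edges S ^^ (k1+k2)" "k1 + k2 \<le> r + s" by (auto simp: relpow_add)
  then show ?thesis unfolding within_def by blast
qed

lemma within0: "within S 0 x x" unfolding within_def by auto
lemma within2: "(a,c) \<in> edges S \<Longrightarrow> (c,b) \<in> edges S \<Longrightarrow> within S 2 a b"
  using within_edge[OF within_edge[OF within0]] by (simp add: numeral_eq_Suc)
lemma within2': "(a,b) \<in> edges S \<Longrightarrow> within S 2 a b"
  using within_mono[OF within_edge[OF within0]] by (simp add: numeral_eq_Suc)
lemma within2'': "within S 2 a a"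
  using within_mono[OF within0] by simp

definition QM :: "vname \<Rightarrow> nat \<Rightarrow> vname fset \<Rightarrow> bool" where
  "QM v k e = (\<exists>a. a |\<in>| e \<and> 1 \<le> k \<and> within K ((k-1) div 2) v a)"
definition QC :: "vname \<Rightarrow> nat \<Rightarrow> vname fset \<Rightarrow> vname fset \<Rightarrow> bool" where
  "QC v k F e = (\<exists>a. (a |\<in>| e \<and> 2 \<le> k \<and> within K ((k-2) div 2) v a)
     \<or> (a |\<in>| F \<and> (\<exists>b. b |\<in>| e \<and> (a,b) \<in> edges K) \<and> 3 \<le> k \<and> within K ((k-3) div 2) v a)
     \<or> (a |\<in>| F \<and> 4 \<le> k \<and> within K ((k-4) div 2) v a))"
definition Q :: "vname \<Rightarrow> nat \<Rightarrow> vname \<Rightarrow> bool" where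
  "Q v k x = (case x of OMid e \<Rightarrow> QM v k e | OCen F e \<Rightarrow> QC v k F e
     | _ \<Rightarrow> within K (k div 2) v x)"

lemma Q_M[simp]: "Q v k (OMid e) = QM v k e" by (simp add: Q_def)
lemma Q_C[simp]: "Q v k (OCen F e) = QC v k F e" by (simp add: Q_def)
lemma Q_old: "\<not> isO x \<Longrightarrow> Q v k x = within K (k div 2) v x"
  by (cases x) (auto simp: Q_def)

lemma L_vm: "\<not>isO a \<Longrightarrow> a |\<in>| e \<Longrightarrow> Q v k a \<Longrightarrow> Q v (Suc k) (OMid e)"
  by (auto simp: Q_old QM_def)

lemma L_mv: "Q v k (OMid e) \<Longrightarrow> \<not>isO b \<Longrightarrow> (\<forall>c. c |\<in>| e \<longrightarrow> c = b \<or> (c,b) \<in> edges K) \<Longrightarrow> Q v (Suc k) b"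
proof -
  assume q: "Q v k (OMid e)" and b: "\<not>isO b" and h: "\<forall>c. c |\<in>| e \<longrightarrow> c = b \<or> (c,b) \<in> edges K"
  from q obtain a where a: "a |\<in>| e" "1 \<le> k" "within K ((k-1) div 2) v a" by (auto simp: QM_def)
  have le: "(k-1) div 2 \<le> Suc k div 2" "Suc ((k-1) div 2) \<le> Suc k div 2" using a(2) by arith+
  from h a(1) have "a = b \<or> (a,b) \<in> edges K" by blast
  then have "within K (Suc k div 2) v b"
    using within_mono[OF a(3) le(1)] within_mono[OF within_edge[OF a(3)] le(2)] by blast
  then show ?thesis using b by (simp add: Q_old)
qed

lemma L_mc: "Q v k (OMid e) \<Longrightarrow> Q v (Suc k) (OCen F e)"
  by (auto simp: QM_def QC_def)

lemma L_cm: "Q v k (OCen F e) \<Longrightarrow> (\<forall>a. a |\<in>| F \<longrightarrow> (\<exists>b. b |\<in>| e \<and> within K 2 a b)) \<Longrightarrow> Q v (Suc k) (OMid e)"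
proof -
  assume q: "Q v k (OCen F e)" and h: "\<forall>a. a |\<in>| F \<longrightarrow> (\<exists>b. b |\<in>| e \<and> within K 2 a b)"
  from q obtain a where a: "(a |\<in>| e \<and> 2 \<le> k \<and> within K ((k-2) div 2) v a)
     \<or> (a |\<in>| F \<and> (\<exists>b. b |\<in>| e \<and> (a,b) \<in> edges K) \<and> 3 \<le> k \<and> within K ((k-3) div 2) v a)
     \<or> (a |\<in>| F \<and> 4 \<le> k \<and> within K ((k-4) div 2) v a)" by (auto simp: QC_def)
  then have "\<exists>b. b |\<in>| e \<and> within K (k div 2) v b"
  proof (elim disjE conjE)
    assume A: "a |\<in>| e" "2 \<le> k" "within K ((k-2) div 2) v a"
    have "(k-2) div 2 \<le> k div 2" by arith
    then show ?thesis using A within_mono by blast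
  next
    assume A: "a |\<in>| F" "\<exists>b. b |\<in>| e \<and> (a,b) \<in> edges K" "3 \<le> k" "within K ((k-3) div 2) v a"
    then obtain b where b: "b |\<in>| e" "(a,b) \<in> edges K" by blast
    have "Suc ((k-3) div 2) \<le> k div 2" using A(3) by arith
    then show ?thesis using b within_mono[OF within_edge[OF A(4) b(2)]] by blast
  next
    assume A: "a |\<in>| F" "4 \<le> k" "within K ((k-4) div 2) v a"
    then obtain b where b: "b |\<in>| e" "within K 2 a b" using h by blast
    have "(k-4) div 2 + 2 \<le> k div 2" using A(2) by arith
    then show ?thesis using b within_mono[OF within_trans[OF A(3) b(2)]] by blast
  qed
  then show ?thesis by (simp add: QM_def)
qed

lemma L_cc: "Q v k (OCen F e) \<Longrightarrow> (\<forall>x. x |\<in>| e \<longrightarrow> x |\<in>| e' \<or> (x |\<in>| F \<and> (\<exists>y. y |\<in>| e' \<and> (x,y) \<in> edges K))) \<Longrightarrow> Q v (Suc k) (OCen F e')"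
proof -
  assume q: "Q v k (OCen F e)" and h: "\<forall>x. x |\<in>| e \<longrightarrow> x |\<in>| e' \<or> (x |\<in>| F \<and> (\<exists>y. y |\<in>| e' \<and> (x,y) \<in> edges K))"
  from q obtain a where a: "(a |\<in>| e \<and> 2 \<le> k \<and> within K ((k-2) div 2) v a)
     \<or> (a |\<in>| F \<and> (\<exists>b. b |\<in>| e \<and> (a,b) \<in> edges K) \<and> 3 \<le> k \<and> within K ((k-3) div 2) v a)
     \<or> (a |\<in>| F \<and> 4 \<le> k \<and> within K ((k-4) div 2) v a)" by (auto simp: QC_def)
  then show ?thesis
  proof (elim disjE conjE)
    assume A: "a |\<in>| e" "2 \<le> k" "within K ((k-2) div 2) v a"
    have l1: "(k-2) div 2 \<le> (Suc k - 2) div 2" "(k-2) div 2 = (Suc k - 3) div 2" using A(2) by arith+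
    from h A(1) have "a |\<in>| e' \<or> (a |\<in>| F \<and> (\<exists>y. y |\<in>| e' \<and> (a,y) \<in> edges K))" by blast
    then show ?thesis
    proof
      assume "a |\<in>| e'" then show ?thesis unfolding Q_C QC_def using A within_mono[OF A(3) l1(1)] by auto
    next
      assume "a |\<in>| F \<and> (\<exists>y. y |\<in>| e' \<and> (a,y) \<in> edges K)"
      then show ?thesis unfolding Q_C QC_def using A l1(2) by (metis Suc_le_mono numeral_2_eq_2 numeral_3_eq_3)
    qed
  next
    assume A: "a |\<in>| F" "\<exists>b. b |\<in>| e \<and> (a,b) \<in> edges K" "3 \<le> k" "within K ((k-3) div 2) v a"
    have "(k-3) div 2 = (Suc k - 4) div 2" "4 \<le> Suc k" using A(3) by arith+
    then show ?thesis unfolding Q_C QC_def using A by metis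
  next
    assume A: "a |\<in>| F" "4 \<le> k" "within K ((k-4) div 2) v a"
    have "(k-4) div 2 \<le> (Suc k - 4) div 2" "4 \<le> Suc k" using A(2) by arith+
    then show ?thesis unfolding Q_C QC_def using A within_mono by (metis)
  qed
qed

lemma face_step:
  assumes f: "f \<in> K" and g: "g \<in> subdiv OMid OCen f" and i: "i < length g"
    and xy: "{x,y} = {g!i, g!(Suc i mod length g)}" and q: "Q v k x"
  shows "Q v (Suc k) y"
proof -
  have ok: "okf f" using f by (rule Kface)
  define a0 a1 a2 a3 a4 where "a0 = f!0" "a1 = f!1" "a2 = f!2" "a3 = f!3" "a4 = f!4"
  have fe: "f = [a0,a1,a2,a3,a4]" using ok len5 unfolding okf_def a0_a1_a2_a3_a4_def by blast
  have nO: "\<not>isO a0" "\<not>isO a1" "\<not>isO a2" "\<not>isO a3" "\<not>isO a4" using ok unfolding fe okf_def by auto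
  have E: "(a0,a1) \<in> edges K" "(a1,a2) \<in> edges K" "(a2,a3) \<in> edges K" "(a3,a4) \<in> edges K" "(a4,a0) \<in> edges K"
    using edgesI[OF f, of 0] edgesI[OF f, of 1] edgesI[OF f, of 2] edgesI[OF f, of 3] edgesI[OF f, of 4]
    unfolding fe by simp_all
  note Es = E edges_sym[OF E(1)] edges_sym[OF E(2)] edges_sym[OF E(3)] edges_sym[OF E(4)] edges_sym[OF E(5)]
  note W = within2[OF Es(1) Es(2)] within2[OF Es(2) Es(3)] within2[OF Es(3) Es(4)] within2[OF Es(4) Es(5)] within2[OF Es(5) Es(1)]
     within2[OF Es(10) Es(9)] within2[OF Es(9) Es(8)] within2[OF Es(8) Es(7)] within2[OF Es(7) Es(6)] within2[OF Es(6) Es(10)]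
     within2'[OF Es(1)] within2'[OF Es(2)] within2'[OF Es(3)] within2'[OF Es(4)] within2'[OF Es(5)]
     within2'[OF Es(6)] within2'[OF Es(7)] within2'[OF Es(8)] within2'[OF Es(9)] within2'[OF Es(10)]
     within2''
  define F where "F = fset_of_list [a0,a1,a2,a3,a4]"
  have cm: "\<forall>a. a |\<in>| F \<longrightarrow> (\<exists>b. b |\<in>| {|a0,a1|} \<and> within K 2 a b)"
    "\<forall>a. a |\<in>| F \<longrightarrow> (\<exists>b. b |\<in>| {|a1,a2|} \<and> within K 2 a b)"
    "\<forall>a. a |\<in>| F \<longrightarrow> (\<exists>b. b |\<in>| {|a2,a3|} \<and> within K 2 a b)"
    "\<forall>a. a |\<in>| F \<longrightarrow> (\<exists>b. b |\<in>| {|a3,a4|} \<and> within K 2 a b)"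
    "\<forall>a. a |\<in>| F \<longrightarrow> (\<exists>b. b |\<in>| {|a4,a0|} \<and> within K 2 a b)"
    unfolding F_def using W by auto
  have cc: "\<forall>x. x |\<in>| {|a0,a1|} \<longrightarrow> x |\<in>| {|a1,a2|} \<or> (x |\<in>| F \<and> (\<exists>y. y |\<in>| {|a1,a2|} \<and> (x,y) \<in> edges K))"
     "\<forall>x. x |\<in>| {|a1,a2|} \<longrightarrow> x |\<in>| {|a2,a3|} \<or> (x |\<in>| F \<and> (\<exists>y. y |\<in>| {|a2,a3|} \<and> (x,y) \<in> edges K))"
     "\<forall>x. x |\<in>| {|a2,a3|} \<longrightarrow> x |\<in>| {|a3,a4|} \<or> (x |\<in>| F \<and> (\<exists>y. y |\<in>| {|a3,a4|} \<and> (x,y) \<in> edges K))"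
     "\<forall>x. x |\<in>| {|a3,a4|} \<longrightarrow> x |\<in>| {|a4,a0|} \<or> (x |\<in>| F \<and> (\<exists>y. y |\<in>| {|a4,a0|} \<and> (x,y) \<in> edges K))"
     "\<forall>x. x |\<in>| {|a4,a0|} \<longrightarrow> x |\<in>| {|a0,a1|} \<or> (x |\<in>| F \<and> (\<exists>y. y |\<in>| {|a0,a1|} \<and> (x,y) \<in> edges K))"
     "\<forall>x. x |\<in>| {|a1,a2|} \<longrightarrow> x |\<in>| {|a0,a1|} \<or> (x |\<in>| F \<and> (\<exists>y. y |\<in>| {|a0,a1|} \<and> (x,y) \<in> edges K))"
     "\<forall>x. x |\<in>| {|a2,a3|} \<longrightarrow> x |\<in>| {|a1,a2|} \<or> (x |\<in>| F \<and> (\<exists>y. y |\<in>| {|a1,a2|} \<and> (x,y) \<in> edges K))"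
     "\<forall>x. x |\<in>| {|a3,a4|} \<longrightarrow> x |\<in>| {|a2,a3|} \<or> (x |\<in>| F \<and> (\<exists>y. y |\<in>| {|a2,a3|} \<and> (x,y) \<in> edges K))"
     "\<forall>x. x |\<in>| {|a4,a0|} \<longrightarrow> x |\<in>| {|a3,a4|} \<or> (x |\<in>| F \<and> (\<exists>y. y |\<in>| {|a3,a4|} \<and> (x,y) \<in> edges K))"
     "\<forall>x. x |\<in>| {|a0,a1|} \<longrightarrow> x |\<in>| {|a4,a0|} \<or> (x |\<in>| F \<and> (\<exists>y. y |\<in>| {|a4,a0|} \<and> (x,y) \<in> edges K))"
    unfolding F_def using Es by auto
  have mv: "\<forall>c. c |\<in>| {|a0,a1|} \<longrightarrow> c = a0 \<or> (c,a0) \<in> edges K" "\<forall>c. c |\<in>| {|a0,a1|} \<longrightarrow> c = a1 \<or> (c,a1) \<in> edges K"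
     "\<forall>c. c |\<in>| {|a1,a2|} \<longrightarrow> c = a1 \<or> (c,a1) \<in> edges K" "\<forall>c. c |\<in>| {|a1,a2|} \<longrightarrow> c = a2 \<or> (c,a2) \<in> edges K"
     "\<forall>c. c |\<in>| {|a2,a3|} \<longrightarrow> c = a2 \<or> (c,a2) \<in> edges K" "\<forall>c. c |\<in>| {|a2,a3|} \<longrightarrow> c = a3 \<or> (c,a3) \<in> edges K"
     "\<forall>c. c |\<in>| {|a3,a4|} \<longrightarrow> c = a3 \<or> (c,a3) \<in> edges K" "\<forall>c. c |\<in>| {|a3,a4|} \<longrightarrow> c = a4 \<or> (c,a4) \<in> edges K"
     "\<forall>c. c |\<in>| {|a4,a0|} \<longrightarrow> c = a4 \<or> (c,a4) \<in> edges K" "\<forall>c. c |\<in>| {|a4,a0|} \<longrightarrow> c = a0 \<or> (c,a0) \<in> edges K"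
    using Es by auto
  have gs: "g \<in> {[OCen F {|a0,a1|}, OCen F {|a1,a2|}, OCen F {|a2,a3|}, OCen F {|a3,a4|}, OCen F {|a4,a0|}],
     [a0, OMid {|a0,a1|}, OCen F {|a0,a1|}, OCen F {|a4,a0|}, OMid {|a4,a0|}],
     [a1, OMid {|a1,a2|}, OCen F {|a1,a2|}, OCen F {|a0,a1|}, OMid {|a0,a1|}],
     [a2, OMid {|a2,a3|}, OCen F {|a2,a3|}, OCen F {|a1,a2|}, OMid {|a1,a2|}],
     [a3, OMid {|a3,a4|}, OCen F {|a3,a4|}, OCen F {|a2,a3|}, OMid {|a2,a3|}],
     [a4, OMid {|a4,a0|}, OCen F {|a4,a0|}, OCen F {|a3,a4|}, OMid {|a3,a4|}]}"
    using g unfolding fe sd Let_def F_def by simp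
  then have lg: "length g = 5" by auto
  with i have "i = 0 \<or> i = 1 \<or> i = 2 \<or> i = 3 \<or> i = 4" by auto
  then show ?thesis using gs xy q lg
    apply (auto simp del: Q_M Q_C simp: doubleton_eq_iff)
    apply ((erule L_cc, rule cc) | (erule L_mc) | (erule L_cm, rule cm) | (erule L_vm[rotated 2], rule nO, simp) | (erule L_mv, rule nO, rule mv))+
    done
qed

lemma Kface5: "f \<in> K \<Longrightarrow> \<exists>a0 a1 a2 a3 a4. f = [a0,a1,a2,a3,a4]"
proof -
  assume "f \<in> K"
  then have "length f = 5" using Kface unfolding okf_def by blast
  then have "f = [f!0,f!1,f!2,f!3,f!4]" by (rule len5)
  then show ?thesis by blast
qed


lemma pent: assumes f: "f \<in> K" and a: "a \<in> set f" and b: "b \<in> set f" shows "within K 2 a b"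
proof -
  obtain a0 a1 a2 a3 a4 where fe: "f = [a0,a1,a2,a3,a4]" using Kface5[OF f] by blast
  have E: "(a0,a1) \<in> edges K" "(a1,a2) \<in> edges K" "(a2,a3) \<in> edges K" "(a3,a4) \<in> edges K" "(a4,a0) \<in> edges K"
    using edgesI[OF f, of 0] edgesI[OF f, of 1] edgesI[OF f, of 2] edgesI[OF f, of 3] edgesI[OF f, of 4]
    unfolding fe by simp_all
  note Es = E edges_sym[OF E(1)] edges_sym[OF E(2)] edges_sym[OF E(3)] edges_sym[OF E(4)] edges_sym[OF E(5)]
  note W = within2[OF Es(1) Es(2)] within2[OF Es(2) Es(3)] within2[OF Es(3) Es(4)] within2[OF Es(4) Es(5)] within2[OF Es(5) Es(1)]
     within2[OF Es(10) Es(9)] within2[OF Es(9) Es(8)] within2[OF Es(8) Es(7)] within2[OF Es(7) Es(6)] within2[OF Es(6) Es(10)]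
     within2'[OF Es(1)] within2'[OF Es(2)] within2'[OF Es(3)] within2'[OF Es(4)] within2'[OF Es(5)]
     within2'[OF Es(6)] within2'[OF Es(7)] within2'[OF Es(8)] within2'[OF Es(9)] within2'[OF Es(10)]
     within2''
  show ?thesis using a b unfolding fe by (simp; elim disjE; simp add: W)
qed

lemma Q_mono: "Q v k x \<Longrightarrow> k \<le> r \<Longrightarrow> Q v r x"
proof (cases x)
  case (OMid e)
  assume "Q v k x" "k \<le> r"
  moreover have "(k-1) div 2 \<le> (r-1) div 2" using \<open>k \<le> r\<close> by (simp add: div_le_mono)
  ultimately show ?thesis using OMid by (auto simp: QM_def intro: within_mono)
next
  case (OCen F e)
  assume q: "Q v k x" and kr: "k \<le> r"
  have d: "(k-2) div 2 \<le> (r-2) div 2" "(k-3) div 2 \<le> (r-3) div 2" "(k-4) div 2 \<le> (r-4) div 2"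
    using kr by (simp_all add: div_le_mono)
  from q obtain a where a: "(a |\<in>| e \<and> 2 \<le> k \<and> within K ((k-2) div 2) v a)
     \<or> (a |\<in>| F \<and> (\<exists>b. b |\<in>| e \<and> (a,b) \<in> edges K) \<and> 3 \<le> k \<and> within K ((k-3) div 2) v a)
     \<or> (a |\<in>| F \<and> 4 \<le> k \<and> within K ((k-4) div 2) v a)" using OCen by (auto simp: QC_def)
  then show ?thesis unfolding OCen Q_C QC_def
  proof (elim disjE conjE)
    assume "a |\<in>| e" "2 \<le> k" "within K ((k-2) div 2) v a"
    then show "\<exists>a. a |\<in>| e \<and> 2 \<le> r \<and> within K ((r - 2) div 2) v a \<or> a |\<in>| F \<and> (\<exists>b. b |\<in>| e \<and> (a, b) \<in> edges K) \<and> 3 \<le> r \<and> within K ((r - 3) div 2) v a \<or> a |\<in>| F \<and> 4 \<le> r \<and> within K ((r - 4) div 2) v a"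
      using within_mono[OF _ d(1)] kr by auto
  next
    assume "a |\<in>| F" "\<exists>b. b |\<in>| e \<and> (a,b) \<in> edges K" "3 \<le> k" "within K ((k-3) div 2) v a"
    then show "\<exists>a. a |\<in>| e \<and> 2 \<le> r \<and> within K ((r - 2) div 2) v a \<or> a |\<in>| F \<and> (\<exists>b. b |\<in>| e \<and> (a, b) \<in> edges K) \<and> 3 \<le> r \<and> within K ((r - 3) div 2) v a \<or> a |\<in>| F \<and> 4 \<le> r \<and> within K ((r - 4) div 2) v a"
      using within_mono[OF _ d(2)] kr by auto
  next
    assume "a |\<in>| F" "4 \<le> k" "within K ((k-4) div 2) v a"
    then show "\<exists>a. a |\<in>| e \<and> 2 \<le> r \<and> within K ((r - 2) div 2) v a \<or> a |\<in>| F \<and> (\<exists>b. b |\<in>| e \<and> (a, b) \<in> edges K) \<and> 3 \<le> r \<and> within K ((r - 3) div 2) v a \<or> a |\<in>| F \<and> 4 \<le> r \<and> within K ((r - 4) div 2) v a"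
      using within_mono[OF _ d(3)] kr by auto
  qed
qed (auto simp: Q_def intro: within_mono div_le_mono)

lemma notO_verts: "v \<in> verts K \<Longrightarrow> \<not> isO v"
  using Kface unfolding verts_def okf_def by blast

lemma reach: "v \<in> verts K \<Longrightarrow> (v,x) \<in> edges (omega K) ^^ k \<Longrightarrow> Q v k x"
proof (induction k arbitrary: x)
  case 0
  then show ?case using notO_verts[OF 0(1)] by (simp add: Q_old within0)
next
  case (Suc k)
  from Suc.prems(2) obtain x' where x': "(v,x') \<in> edges (omega K) ^^ k" "(x',x) \<in> edges (omega K)" by auto
  from x'(2) obtain g i where g: "g \<in> omega K" "i < length g" "{x',x} = {g!i, g!(Suc i mod length g)}"
    unfolding edges_def by blast
  from g(1) obtain f where f: "f \<in> K" "g \<in> subdiv OMid OCen f" unfolding omega_def by blast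
  show ?case using face_step[OF f g(2) g(3) Suc.IH[OF Suc.prems(1) x'(1)]] .
qed

lemma reachW: "v \<in> verts K \<Longrightarrow> within (omega K) r v x \<Longrightarrow> Q v r x"
  unfolding within_def using reach Q_mono by blast

lemma kedge2: "(a,b) \<in> edges K \<Longrightarrow> within (omega K) 2 a b"
proof -
  assume "(a,b) \<in> edges K"
  then obtain f i where fi: "f \<in> K" "i < length f" "{a,b} = {f!i, f!(Suc i mod length f)}"
    unfolding edges_def by blast
  obtain a0 a1 a2 a3 a4 where fe: "f = [a0,a1,a2,a3,a4]" using Kface5[OF fi(1)] by blast
  have S: "subdiv OMid OCen f = {[OCen (fset_of_list [a0,a1,a2,a3,a4]) {|a0,a1|}, OCen (fset_of_list [a0,a1,a2,a3,a4]) {|a1,a2|}, OCen (fset_of_list [a0,a1,a2,a3,a4]) {|a2,a3|}, OCen (fset_of_list [a0,a1,a2,a3,a4]) {|a3,a4|}, OCen (fset_of_list [a0,a1,a2,a3,a4]) {|a4,a0|}], [a0, OMid {|a0,a1|}, OCen (fset_of_list [a0,a1,a2,a3,a4]) {|a0,a1|}, OCen (fset_of_list [a0,a1,a2,a3,a4]) {|a4,a0|}, OMid {|a4,a0|}], [a1, OMid {|a1,a2|}, OCen (fset_of_list [a0,a1,a2,a3,a4]) {|a1,a2|}, OCen (fset_of_list [a0,a1,a2,a3,a4]) {|a0,a1|}, OMid {|a0,a1|}], [a2, OMid {|a2,a3|}, OCen (fset_of_list [a0,a1,a2,a3,a4]) {|a2,a3|}, OCen (fset_of_list [a0,a1,a2,a3,a4])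 {|a1,a2|}, OMid {|a1,a2|}], [a3, OMid {|a3,a4|}, OCen (fset_of_list [a0,a1,a2,a3,a4]) {|a3,a4|}, OCen (fset_of_list [a0,a1,a2,a3,a4]) {|a2,a3|}, OMid {|a2,a3|}], [a4, OMid {|a4,a0|}, OCen (fset_of_list [a0,a1,a2,a3,a4]) {|a4,a0|}, OCen (fset_of_list [a0,a1,a2,a3,a4]) {|a3,a4|}, OMid {|a3,a4|}]}"
    unfolding fe by (simp only: sd Let_def)
  have G: "[a0, OMid {|a0,a1|}, OCen (fset_of_list [a0,a1,a2,a3,a4]) {|a0,a1|}, OCen (fset_of_list [a0,a1,a2,a3,a4]) {|a4,a0|}, OMid {|a4,a0|}] \<in> omega K" "[a1, OMid {|a1,a2|}, OCen (fset_of_list [a0,a1,a2,a3,a4]) {|a1,a2|}, OCen (fset_of_list [a0,a1,a2,a3,a4]) {|a0,a1|}, OMid {|a0,a1|}] \<in> omega K" "[a2, OMid {|a2,a3|}, OCen (fset_of_list [a0,a1,a2,a3,a4]) {|a2,a3|}, OCen (fset_of_list [a0,a1,a2,a3,a4]) {|a1,a2|}, OMid {|a1,a2|}] \<in> omega K" "[a3, OMid {|a3,a4|}, OCen (fset_of_list [a0,a1,a2,a3,a4]) {|a3,a4|}, OCen (fset_of_list [a0,a1,a2,a3,a4]) {|a2,a3|}, OMid {|a2,a3|}] \<in> omega K" "[a4, OMid {|a4,a0|}, OCen (fset_of_list [a0,a1,a2,a3,a4]) {|a4,a0|}, OCen (fset_of_list [a0,a1,a2,a3,a4]) {|a3,a4|},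 OMid {|a3,a4|}] \<in> omega K"
    unfolding omega_def using fi(1) by (intro UN_I[of f], simp, simp only: S insert_iff simp_thms)+
  have E: "(a0, OMid {|a0,a1|}) \<in> edges (omega K)" "(OMid {|a0,a1|}, a1) \<in> edges (omega K)"
    "(a1, OMid {|a1,a2|}) \<in> edges (omega K)" "(OMid {|a1,a2|}, a2) \<in> edges (omega K)"
    "(a2, OMid {|a2,a3|}) \<in> edges (omega K)" "(OMid {|a2,a3|}, a3) \<in> edges (omega K)"
    "(a3, OMid {|a3,a4|}) \<in> edges (omega K)" "(OMid {|a3,a4|}, a4) \<in> edges (omega K)"
    "(a4, OMid {|a4,a0|}) \<in> edges (omega K)" "(OMid {|a4,a0|}, a0) \<in> edges (omega K)"
    using edgesI[OF G(1), of 0] edgesI[OF G(2), of 4] edgesI[OF G(2), of 0] edgesI[OF G(3), of 4]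
      edgesI[OF G(3), of 0] edgesI[OF G(4), of 4] edgesI[OF G(4), of 0] edgesI[OF G(5), of 4]
      edgesI[OF G(5), of 0] edgesI[OF G(1), of 4]
    by simp_all
  have ii: "i = 0 \<or> i = 1 \<or> i = 2 \<or> i = 3 \<or> i = 4" using fi(2) fe by auto
  note WW = within2[OF E(1) E(2)] within2[OF edges_sym[OF E(2)] edges_sym[OF E(1)]] within2[OF E(3) E(4)] within2[OF edges_sym[OF E(4)] edges_sym[OF E(3)]] within2[OF E(5) E(6)] within2[OF edges_sym[OF E(6)] edges_sym[OF E(5)]] within2[OF E(7) E(8)] within2[OF edges_sym[OF E(8)] edges_sym[OF E(7)]] within2[OF E(9) E(10)] within2[OF edges_sym[OF E(10)] edges_sym[OF E(9)]]
  show ?thesis using ii fi(3) unfolding fe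
    by (elim disjE; simp add: doubleton_eq_iff; elim disjE; simp add: WW)
qed

lemma dbl_rel: "(v,a) \<in> edges K ^^ k \<Longrightarrow> within (omega K) (2*k) v a"
proof (induction k arbitrary: a)
  case 0 then show ?case by (simp add: within0)
next
  case (Suc k)
  then obtain b where "(v,b) \<in> edges K ^^ k" "(b,a) \<in> edges K" by auto
  then show ?case using within_trans[OF Suc.IH kedge2] by simp
qed

lemma dbl: "within K r v a \<Longrightarrow> within (omega K) (2*r) v a"
  unfolding within_def[of K] using dbl_rel within_mono by (metis mult_le_mono2)

lemma S_lem: "subdiv OMid OCen [a0,a1,a2,a3,a4] = {[OCen (fset_of_list [a0,a1,a2,a3,a4]) {|a0,a1|}, OCen (fset_of_list [a0,a1,a2,a3,a4]) {|a1,a2|}, OCen (fset_of_list [a0,a1,a2,a3,a4]) {|a2,a3|}, OCen (fset_of_list [a0,a1,a2,a3,a4]) {|a3,a4|}, OCen (fset_of_list [a0,a1,a2,a3,a4]) {|a4,a0|}], [a0, OMid {|a0,a1|}, OCen (fset_of_list [a0,a1,a2,a3,a4]) {|a0,a1|}, OCen (fset_of_list [a0,a1,a2,a3,a4]) {|a4,a0|}, OMid {|a4,a0|}], [a1, OMid {|a1,a2|}, OCen (fset_of_list [a0,a1,a2,a3,a4]) {|a1,a2|}, OCen (fset_of_list [a0,a1,a2,a3,a4]) {|a0,a1|}, OMid {|a0,a1|}], [a2, OMid {|a2,a3|}, OCen (fset_of_list [a0,a1,a2,a3,a4]) {|a2,a3|}, OCen (fset_of_list [a0,a1,a2,a3,a4])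 {|a1,a2|}, OMid {|a1,a2|}], [a3, OMid {|a3,a4|}, OCen (fset_of_list [a0,a1,a2,a3,a4]) {|a3,a4|}, OCen (fset_of_list [a0,a1,a2,a3,a4]) {|a2,a3|}, OMid {|a2,a3|}], [a4, OMid {|a4,a0|}, OCen (fset_of_list [a0,a1,a2,a3,a4]) {|a4,a0|}, OCen (fset_of_list [a0,a1,a2,a3,a4]) {|a3,a4|}, OMid {|a3,a4|}]}"
  by (simp only: sd Let_def)

lemma G_lem: assumes "[a0,a1,a2,a3,a4] \<in> K" shows "[a0, OMid {|a0,a1|}, OCen (fset_of_list [a0,a1,a2,a3,a4]) {|a0,a1|}, OCen (fset_of_list [a0,a1,a2,a3,a4]) {|a4,a0|}, OMid {|a4,a0|}] \<in> omega K" "[a1, OMid {|a1,a2|}, OCen (fset_of_list [a0,a1,a2,a3,a4]) {|a1,a2|}, OCen (fset_of_list [a0,a1,a2,a3,a4]) {|a0,a1|}, OMid {|a0,a1|}] \<in> omega K" "[a2, OMid {|a2,a3|}, OCen (fset_of_list [a0,a1,a2,a3,a4]) {|a2,a3|}, OCen (fset_of_list [a0,a1,a2,a3,a4]) {|a1,a2|}, OMid {|a1,a2|}] \<in> omega K" "[a3, OMid {|a3,a4|}, OCen (fset_of_list [a0,a1,a2,a3,a4]) {|a3,a4|}, OCen (fset_of_list [a0,a1,a2,a3,a4]) {|a2,a3|}, OMid {|a2,a3|}] \<in> omega K" "[a4, OMid {|a4,a0|}, OCen (fset_of_list [a0,a1,a2,a3,a4]) {|a4,a0|}, OCen (fset_of_list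 [a0,a1,a2,a3,a4]) {|a3,a4|}, OMid {|a3,a4|}] \<in> omega K"
  unfolding omega_def using assms by (intro UN_I[of "[a0,a1,a2,a3,a4]"], simp, simp only: S_lem insert_iff simp_thms)+

lemma petal_near: assumes g: "[a,m,c,c',m'] \<in> omega K"
  shows "within (omega K) 2 a a" "within (omega K) 2 a m" "within (omega K) 2 a c" "within (omega K) 2 a c'" "within (omega K) 2 a m'"
proof -
  have e: "(a,m) \<in> edges (omega K)" "(m,c) \<in> edges (omega K)" "(c',m') \<in> edges (omega K)" "(m',a) \<in> edges (omega K)"
    using edgesI[OF g, of 0] edgesI[OF g, of 1] edgesI[OF g, of 3] edgesI[OF g, of 4] by simp_all
  show "within (omega K) 2 a a" "within (omega K) 2 a m" "within (omega K) 2 a c" "within (omega K) 2 a c'" "within (omega K) 2 a m'"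
    using within2[OF e(1) e(2)] within2'[OF e(1)] within2'[OF edges_sym[OF e(4)]]
    within2[OF edges_sym[OF e(4)] edges_sym[OF e(3)]] within2''[of "omega K" a] by auto
qed

lemma near: assumes f: "f \<in> K" and g: "g \<in> subdiv OMid OCen f" and x: "x \<in> set g"
  shows "\<exists>a\<in>set f. within (omega K) 2 a x"
proof -
  obtain a0 a1 a2 a3 a4 where fe: "f = [a0,a1,a2,a3,a4]" using Kface5[OF f] by blast
  note G = G_lem[OF f[unfolded fe]]
  note P = petal_near[OF G(1)] petal_near[OF G(2)] petal_near[OF G(3)] petal_near[OF G(4)] petal_near[OF G(5)]
  have "g \<in> {[OCen (fset_of_list [a0,a1,a2,a3,a4]) {|a0,a1|}, OCen (fset_of_list [a0,a1,a2,a3,a4]) {|a1,a2|}, OCen (fset_of_list [a0,a1,a2,a3,a4]) {|a2,a3|}, OCen (fset_of_list [a0,a1,a2,a3,a4]) {|a3,a4|}, OCen (fset_of_list [a0,a1,a2,a3,a4]) {|a4,a0|}], [a0, OMid {|a0,a1|}, OCen (fset_of_list [a0,a1,a2,a3,a4]) {|a0,a1|}, OCen (fset_of_list [a0,a1,a2,a3,a4]) {|a4,a0|}, OMid {|a4,a0|}], [a1, OMid {|a1,a2|}, OCen (fset_of_list [a0,a1,a2,a3,a4]) {|a1,a2|}, OCen (fset_of_list [a0,a1,a2,a3,a4]) {|a0,a1|}, OMid {|a0,a1|}], [a2, OMid {|a2,a3|}, OCen (fset_of_list [a0,a1,a2,a3,a4]) {|a2,a3|}, OCen (fset_of_list [a0,a1,a2,a3,a4])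 {|a1,a2|}, OMid {|a1,a2|}], [a3, OMid {|a3,a4|}, OCen (fset_of_list [a0,a1,a2,a3,a4]) {|a3,a4|}, OCen (fset_of_list [a0,a1,a2,a3,a4]) {|a2,a3|}, OMid {|a2,a3|}], [a4, OMid {|a4,a0|}, OCen (fset_of_list [a0,a1,a2,a3,a4]) {|a4,a0|}, OCen (fset_of_list [a0,a1,a2,a3,a4]) {|a3,a4|}, OMid {|a3,a4|}]}" using g unfolding fe S_lem .
  then show ?thesis using x unfolding fe
    apply (simp only: insert_iff empty_iff simp_thms)
    apply (elim disjE)
    apply (simp_all only: set_simps insert_iff empty_iff simp_thms)
    apply (elim disjE; simp add: P[simplified])+
    done
qed

lemma has_O: assumes f: "f \<in> K" and g: "g \<in> subdiv OMid OCen f"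
  shows "\<exists>x\<in>set g. (\<exists>e. x = OMid e \<and> (\<forall>a. a |\<in>| e \<longrightarrow> a \<in> set f)) \<or> (\<exists>e. x = OCen (fset_of_list f) e \<and> (\<forall>a. a |\<in>| e \<longrightarrow> a \<in> set f))"
proof -
  obtain a0 a1 a2 a3 a4 where fe: "f = [a0,a1,a2,a3,a4]" using Kface5[OF f] by blast
  have "g \<in> {[OCen (fset_of_list [a0,a1,a2,a3,a4]) {|a0,a1|}, OCen (fset_of_list [a0,a1,a2,a3,a4]) {|a1,a2|}, OCen (fset_of_list [a0,a1,a2,a3,a4]) {|a2,a3|}, OCen (fset_of_list [a0,a1,a2,a3,a4]) {|a3,a4|}, OCen (fset_of_list [a0,a1,a2,a3,a4]) {|a4,a0|}], [a0, OMid {|a0,a1|}, OCen (fset_of_list [a0,a1,a2,a3,a4]) {|a0,a1|}, OCen (fset_of_list [a0,a1,a2,a3,a4]) {|a4,a0|}, OMid {|a4,a0|}], [a1, OMid {|a1,a2|}, OCen (fset_of_list [a0,a1,a2,a3,a4]) {|a1,a2|}, OCen (fset_of_list [a0,a1,a2,a3,a4]) {|a0,a1|}, OMid {|a0,a1|}], [a2, OMid {|a2,a3|}, OCen (fset_of_list [a0,a1,a2,a3,a4]) {|a2,a3|}, OCen (fset_of_list [a0,a1,a2,a3,a4]) {|a1,a2|}, OMid {|a1,a2|}], [a3, OMid {|a3,a4|}, OCen (fset_of_list [a0,a1,a2,a3,a4]) {|a3,a4|}, OCen (fset_of_list [a0,a1,a2,a3,a4]) {|a2,a3|}, OMid {|a2,a3|}],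 [a4, OMid {|a4,a0|}, OCen (fset_of_list [a0,a1,a2,a3,a4]) {|a4,a0|}, OCen (fset_of_list [a0,a1,a2,a3,a4]) {|a3,a4|}, OMid {|a3,a4|}]}" using g unfolding fe S_lem .
  then show ?thesis unfolding fe
    apply (simp only: insert_iff empty_iff simp_thms)
    apply (elim disjE)
    apply auto
    done
qed

lemma left_key: assumes v: "v \<in> verts K" and f: "f \<in> K" and g: "g \<in> subdiv OMid OCen f"
  and w: "\<forall>x\<in>set g. within (omega K) (2*n-2) v x"
  shows "\<exists>a\<in>set f. within K (n-2) v a"
proof -
  obtain x where x: "x \<in> set g" and xx: "(\<exists>e. x = OMid e \<and> (\<forall>a. a |\<in>| e \<longrightarrow> a \<in> set f)) \<or> (\<exists>e. x = OCen (fset_of_list f) e \<and> (\<forall>a. a |\<in>| e \<longrightarrow> a \<in> set f))"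
    using has_O[OF f g] by blast
  have q: "Q v (2*n-2) x" using reachW[OF v] w x by blast
  from xx show ?thesis
  proof (elim disjE exE conjE)
    fix e assume e: "x = OMid e" "\<forall>a. a |\<in>| e \<longrightarrow> a \<in> set f"
    from q obtain a where a: "a |\<in>| e" "1 \<le> 2*n-2" "within K ((2*n-2-1) div 2) v a" unfolding e Q_M QM_def by blast
    have "(2*n-2-1) div 2 = n-2" using a(2) by arith
    then show ?thesis using a e by auto
  next
    fix e assume e: "x = OCen (fset_of_list f) e" "\<forall>a. a |\<in>| e \<longrightarrow> a \<in> set f"
    from q obtain a where a: "(a |\<in>| e \<and> 2 \<le> 2*n-2 \<and> within K ((2*n-2-2) div 2) v a)
     \<or> (a |\<in>| fset_of_list f \<and> (\<exists>b. b |\<in>| e \<and> (a,b) \<in> edges K) \<and> 3 \<le> 2*n-2 \<and> within K ((2*n-2-3) div 2) v a)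
     \<or> (a |\<in>| fset_of_list f \<and> 4 \<le> 2*n-2 \<and> within K ((2*n-2-4) div 2) v a)" unfolding e Q_C QC_def by blast
    then show ?thesis
    proof (elim disjE conjE)
      assume A: "a |\<in>| e" "2 \<le> 2*n-2" "within K ((2*n-2-2) div 2) v a"
      have "(2*n-2-2) div 2 = n-2" by arith
      then show ?thesis using A e by auto
    next
      assume A: "a |\<in>| fset_of_list f" "\<exists>b. b |\<in>| e \<and> (a,b) \<in> edges K" "3 \<le> 2*n-2" "within K ((2*n-2-3) div 2) v a"
      have "(2*n-2-3) div 2 \<le> n-2" by arith
      then have "within K (n-2) v a" using A(4) within_mono by blast
      then show ?thesis using A(1) by (auto simp: fset_of_list_elem)
    next
      assume A: "a |\<in>| fset_of_list f" "4 \<le> 2*n-2" "within K ((2*n-2-4) div 2) v a"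
      have "(2*n-2-4) div 2 \<le> n-2" by arith
      then have "within K (n-2) v a" using A(3) within_mono by blast
      then show ?thesis using A(1) by (auto simp: fset_of_list_elem)
    qed
  qed
qed

theorem lemmal:
  assumes "v \<in> verts K"
  shows "ball v (2 * n - 2) (omega K) \<subseteq> omega (ball v n K)
       \<and> omega (ball v n K) \<subseteq> ball v (2 * n + 2) (omega K)"
proof
  show "ball v (2 * n - 2) (omega K) \<subseteq> omega (ball v n K)"
  proof
    fix g assume "g \<in> ball v (2 * n - 2) (omega K)"
    then have gK: "g \<in> omega K" and w: "\<forall>x\<in>set g. within (omega K) (2*n-2) v x" unfolding ball_def by auto
    from gK obtain f where f: "f \<in> K" "g \<in> subdiv OMid OCen f" unfolding omega_def by blast
    obtain a where a: "a \<in> set f" "within K (n-2) v a" using left_key[OF assms f w] by blast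
    have n2: "2 \<le> n"
    proof (rule ccontr)
      assume "\<not> 2 \<le> n"
      then have "2*n-2 = 0" by arith
      obtain x where x: "x \<in> set g" and xx: "(\<exists>e. x = OMid e \<and> (\<forall>a. a |\<in>| e \<longrightarrow> a \<in> set f)) \<or> (\<exists>e. x = OCen (fset_of_list f) e \<and> (\<forall>a. a |\<in>| e \<longrightarrow> a \<in> set f))"
        using has_O[OF f] by blast
      have "Q v 0 x" using reachW[OF assms] w x \<open>2*n-2 = 0\<close> by metis
      then show False using xx by (auto simp: QM_def QC_def)
    qed
    have "\<forall>b\<in>set f. within K n v b"
    proof
      fix b assume "b \<in> set f"
      then have "within K (n-2+2) v b" using within_trans[OF a(2) pent[OF f(1) a(1)]] by blast
      moreover have "n-2+2 = n" using n2 by simp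
      ultimately show "within K n v b" by simp
    qed
    then have "f \<in> ball v n K" using f unfolding ball_def by blast
    then show "g \<in> omega (ball v n K)" using f unfolding omega_def by blast
  qed
next
  show "omega (ball v n K) \<subseteq> ball v (2 * n + 2) (omega K)"
  proof
    fix g assume "g \<in> omega (ball v n K)"
    then obtain f where f: "f \<in> ball v n K" "g \<in> subdiv OMid OCen f" unfolding omega_def by blast
    then have fK: "f \<in> K" and fw: "\<forall>a\<in>set f. within K n v a" unfolding ball_def by auto
    have gK: "g \<in> omega K" using fK f(2) unfolding omega_def by blast
    have "\<forall>x\<in>set g. within (omega K) (2*n+2) v x"
    proof
      fix x assume "x \<in> set g"
      then obtain a where a: "a \<in> set f" "within (omega K) 2 a x" using near[OF fK f(2)] by blast
      show "within (omega K) (2*n+2) v x" using within_trans[OF dbl[OF fw[rule_format, OF a(1)]] a(2)] .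
    qed
    then show "g \<in> ball v (2 * n + 2) (omega K)" using gK unfolding ball_def by blast
  qed
qed

end
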